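(* Let $G$ be split reductive with root system of type $B_r$, $r\geqslant3$, with simple roots $\alpha_1,\dots,\alpha_r$ in Bourbaki labelling ($\alpha_r$ short), and let $\widetilde G$ be an $n$-fold Brylinski--Deligne cover associated with a Weyl-invariant quadratic form $Q$. Partition $\Phi_+=\Phi_{+,I}\sqcup\Phi_{+,II}\sqcup\Phi_{+,III}$ with $\Phi_{+,I}=\{\sum_{i\leqslant k\leqslant r}\alpha_k:1\leqslant i\leqslant r\}$, $\Phi_{+,II}=\{\sum_{i\leqslant k<j}\alpha_k:1\leqslant i<j\leqslant r\}$, $\Phi_{+,III}=\{\sum_{i\leqslant k<j}\alpha_k+2\sum_{j\leqslant k\leqslant r}\alpha_k:1\leqslant i<j\leqslant r\}$, and $\Phi_+^\vee=\Phi^\vee_{+,I}\sqcup\Phi^\vee_{+,II}\sqcup\Phi^\vee_{+,III}$ with $\Phi^\vee_{+,I}=\{\sum_{i\leqslant k<j}\alpha_k^\vee:1\leqslant i<j\leqslant r\}$, $\Phi^\vee_{+,II}=\{\sum_{i\leqslant k<j}\alpha_k^\vee+2\sum_{j\leqslant k<r}\alpha_k^\vee+\alpha_r^\vee:1\leqslant i<j\leqslant r\}$, $\Phi^\vee_{+,III}=\{2\sum_{i\leqslant k<r}\alpha_k^\vee+\alpha_r^\vee:1\leqslant i\leqslant r\}$. If $n_{\alpha_i}=2n_{\alpha_r}$ for all $1\leqslant i<r$, then $$f_X(\Phi^\vee_{+,I})=f_Y(\Phi_{+,II}),\quad f_X(\Phi^\vee_{+,II})=f_Y(\Phi_{+,III}),\quad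 f_X(\Phi^\vee_{+,III})=f_Y(\Phi_{+,I});$$ in particular $f_X(\Phi^\vee_+)=\frac{1}{2n_{\alpha_r}}[1,2r]=f_Y(\Phi_+)$. If $n_\alpha$ is constant on $\alpha\in\Delta$, then $f_X(\Phi^\vee_+)=\frac{1}{n_\alpha}[1,2r-1]=f_Y(\Phi_+)$.
   Context: $[a,b]$ denotes $\{a,a+1,\dots,b\}$. Notation: $\omega_\alpha$ fundamental weights, $\omega^\vee_\alpha$ fundamental coweights, $\rho^\vee=\sum_{\alpha\in\Delta}\omega_\alpha^\vee$. $B_Q(y,z)=Q(y+z)-Q(y)-Q(z)$, $Y_{Q,n}=\{y\in Y:B_Q(y,z)\in n\mathbf Z\ \forall z\in Y\}$, $n_\alpha=n/\gcd(n,Q(\alpha^\vee))$, and $\tilde n_\alpha\in\{n_\alpha,n_\alpha/2\}$ ($\alpha\in\Phi$) defined by $\mathbf Z\alpha^\vee\cap Y_{Q,n}=\mathbf Z\tilde n_\alpha\alpha^\vee$. $f_X:\Phi_+^\vee\to\mathbf Q$, $f_X(\beta^\vee)=\sum_{\alpha\in\Delta}\langle\omega_\alpha/\tilde n_\alpha,\beta^\vee\rangle$; $f_Y:\Phi_+\to\mathbf Q$, $f_Y(\beta)=\langle\rho^\vee,\beta\rangle/\tilde n_\beta$. *)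

theory Defs
  imports "HOL-Analysis.Finite_Cartesian_Product"
begin

text \<open>The cocharacter lattice Y is modelled as int^'m ('m a finite index type),
  the character lattice X = Hom(Y,Z) also as int^'m via the standard pairing.\<close>

definition pair :: "int^'m \<Rightarrow> int^'m \<Rightarrow> int" where
  "pair x y = (\<Sum>i\<in>UNIV. x$i * y$i)"

definition scl :: "int \<Rightarrow> int^'m \<Rightarrow> int^'m" where
  "scl k y = (\<chi> i. k * y$i)"

text \<open>Cartan integers <alpha_i, alpha_j^vee> of type B_r, Bourbaki labelling (alpha_r short).\<close>
definition cartanB :: "nat \<Rightarrow> nat \<Rightarrow> nat \<Rightarrow> int" where
  "cartanB r i j =
     (if i = j then 2
      else if j = i + 1 \<or> i = j + 1 then (if i + 1 = r \<and> j = r then -2 else -1)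
      else 0)"

definition srefl :: "(nat \<Rightarrow> int^'m) \<Rightarrow> (nat \<Rightarrow> int^'m) \<Rightarrow> nat \<Rightarrow> int^'m \<Rightarrow> int^'m" where
  "srefl a c i y = y - scl (pair (a i) y) (c i)"

definition BQ :: "(int^'m \<Rightarrow> int) \<Rightarrow> int^'m \<Rightarrow> int^'m \<Rightarrow> int" where
  "BQ Q y z = Q (y + z) - Q y - Q z"

definition is_quadratic_form :: "(int^'m \<Rightarrow> int) \<Rightarrow> bool" where
  "is_quadratic_form Q \<longleftrightarrow>
     (\<forall>y z w. BQ Q (y + z) w = BQ Q y w + BQ Q z w) \<and>
     (\<forall>k y. Q (scl k y) = k^2 * Q y)"

definition YQn :: "(int^'m \<Rightarrow> int) \<Rightarrow> int \<Rightarrow> (int^'m) set" where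
  "YQn Q n = {y. \<forall>z. n dvd BQ Q y z}"

definition nQ :: "(int^'m \<Rightarrow> int) \<Rightarrow> int \<Rightarrow> int^'m \<Rightarrow> int" where
  "nQ Q n y = n div gcd n (Q y)"

definition tnQ :: "(int^'m \<Rightarrow> int) \<Rightarrow> int \<Rightarrow> int^'m \<Rightarrow> int" where
  "tnQ Q n y = (THE m::int. m > 0 \<and>
      {scl k y | k. True} \<inter> YQn Q n = {scl (k * m) y | k. True})"

text \<open>Roots (resp. coroots) are encoded by their coefficient functions w.r.t. the simple
  roots alpha_1..alpha_r (resp. simple coroots), supported on {1..r}.\<close>

definition PhiI :: "nat \<Rightarrow> (nat \<Rightarrow> int) set" where
  "PhiI r = {(\<lambda>k. if i \<le> k \<and> k \<le> r then 1 else 0) | i. 1 \<le> i \<and> i \<le> r}"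
definition PhiII :: "nat \<Rightarrow> (nat \<Rightarrow> int) set" where
  "PhiII r = {(\<lambda>k. if i \<le> k \<and> k < j then 1 else 0) | i j. 1 \<le> i \<and> i < j \<and> j \<le> r}"
definition PhiIII :: "nat \<Rightarrow> (nat \<Rightarrow> int) set" where
  "PhiIII r = {(\<lambda>k. if i \<le> k \<and> k < j then 1 else if j \<le> k \<and> k \<le> r then 2 else 0)
                | i j. 1 \<le> i \<and> i < j \<and> j \<le> r}"
definition PhiPos :: "nat \<Rightarrow> (nat \<Rightarrow> int) set" where
  "PhiPos r = PhiI r \<union> PhiII r \<union> PhiIII r"

definition PhivI :: "nat \<Rightarrow> (nat \<Rightarrow> int) set" where
  "PhivI r = {(\<lambda>k. if i \<le> k \<and> k < j then 1 else 0) | i j. 1 \<le> i \<and> i < j \<and> j \<le> r}"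
definition PhivII :: "nat \<Rightarrow> (nat \<Rightarrow> int) set" where
  "PhivII r = {(\<lambda>k. if i \<le> k \<and> k < j then 1 else if j \<le> k \<and> k < r then 2
                   else if k = r then 1 else 0) | i j. 1 \<le> i \<and> i < j \<and> j \<le> r}"
definition PhivIII :: "nat \<Rightarrow> (nat \<Rightarrow> int) set" where
  "PhivIII r = {(\<lambda>k. if i \<le> k \<and> k < r then 2 else if k = r then 1 else 0) | i. 1 \<le> i \<and> i \<le> r}"
definition PhivPos :: "nat \<Rightarrow> (nat \<Rightarrow> int) set" where
  "PhivPos r = PhivI r \<union> PhivII r \<union> PhivIII r"

text \<open>W-invariant inner product on the root span of B_r: (alpha_i,alpha_i)=2 (i<r),
  (alpha_r,alpha_r)=1, (alpha_i,alpha_{i+1})=-1.\<close>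
definition ipB :: "nat \<Rightarrow> nat \<Rightarrow> nat \<Rightarrow> int" where
  "ipB r i j = (if i = j then (if i = r then 1 else 2)
               else if j = i + 1 \<or> i = j + 1 then -1 else 0)"

definition sqnormB :: "nat \<Rightarrow> (nat \<Rightarrow> int) \<Rightarrow> int" where
  "sqnormB r b = (\<Sum>i\<in>{1..r}. \<Sum>j\<in>{1..r}. b i * b j * ipB r i j)"

text \<open>Coefficients of beta^vee = 2 beta/(beta,beta) w.r.t. the simple coroots
  alpha_k^vee = 2 alpha_k/(alpha_k,alpha_k).\<close>
definition coroot_coeff :: "nat \<Rightarrow> (nat \<Rightarrow> int) \<Rightarrow> nat \<Rightarrow> int" where
  "coroot_coeff r b k = (b k * ipB r k k) div sqnormB r b"

definition cvec :: "nat \<Rightarrow> (nat \<Rightarrow> int^'m) \<Rightarrow> (nat \<Rightarrow> int) \<Rightarrow> int^'m" where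
  "cvec r c d = (\<Sum>k\<in>{1..r}. scl (d k) (c k))"

text \<open>f_X(beta^vee) = sum_alpha <omega_alpha, beta^vee>/tilde n_alpha; <omega_{alpha_k},beta^vee>
  is the alpha_k^vee-coefficient d k of beta^vee.\<close>
definition fX :: "nat \<Rightarrow> (nat \<Rightarrow> int^'m) \<Rightarrow> (int^'m \<Rightarrow> int) \<Rightarrow> int \<Rightarrow> (nat \<Rightarrow> int) \<Rightarrow> rat" where
  "fX r c Q n d = (\<Sum>k\<in>{1..r}. of_int (d k) / of_int (tnQ Q n (c k)))"

text \<open>f_Y(beta) = <rho^vee, beta>/tilde n_beta, with <rho^vee,beta> the height of beta.\<close>
definition fY :: "nat \<Rightarrow> (nat \<Rightarrow> int^'m) \<Rightarrow> (int^'m \<Rightarrow> int) \<Rightarrow> int \<Rightarrow> (nat \<Rightarrow> int) \<Rightarrow> rat" where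
  "fY r c Q n b = of_int (\<Sum>k\<in>{1..r}. b k) / of_int (tnQ Q n (cvec r c (coroot_coeff r b)))"

end

theory Submission
  imports Defs
begin

lemma dvd_div_gcd_iff:
  fixes n t k :: int assumes "n \<ge> 1"
  shows "n dvd k * t \<longleftrightarrow> (n div gcd n t) dvd k"
proof -
  define g where "g = gcd n t"
  have gpos: "g > 0" using assms by (simp add: g_def)
  obtain m where m: "n = g * m" using g_def by (metis gcd_dvd1 dvdE)
  obtain t' where t': "t = g * t'" using g_def by (metis gcd_dvd2 dvdE)
  have mdef: "n div g = m" using m gpos by simp
  have c0: "coprime (n div g) (t div g)"
    using div_gcd_coprime[of n t] assms unfolding g_def by auto
  have "t div g = t'" using t' gpos by simp
  then have cop: "coprime m t'" using c0 mdef by simp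
  have "n dvd k * t \<longleftrightarrow> g * m dvd g * (k * t')" by (simp add: m t' algebra_simps)
  also have "\<dots> \<longleftrightarrow> m dvd k * t'" using gpos by simp
  also have "\<dots> \<longleftrightarrow> m dvd k" using cop by (simp add: coprime_dvd_mult_left_iff)
  finally show ?thesis by (simp add: g_def[symmetric] mdef)
qed

lemma pair_add: "pair x (y + z) = pair x y + pair x z"
  by (simp add: pair_def sum.distrib algebra_simps)
lemma pair_scl: "pair x (scl k y) = k * pair x y"
  by (simp add: pair_def scl_def sum_distrib_left algebra_simps)
lemma pair_zero: "pair x 0 = 0" by (simp add: pair_def)
lemma pair_sum: "pair x (sum f S) = (\<Sum>k\<in>S. pair x (f k))"
  by (simp add: pair_def sum_distrib_left sum.swap[of _ S] algebra_simps)

lemma scl_add1: "scl (1 + k) y = scl k y + y" by (simp add: scl_def vec_eq_iff algebra_simps)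
lemma scl_0: "scl 0 y = 0" by (simp add: scl_def vec_eq_iff)
lemma scl_neg: "scl (-k) y = - scl k y" by (simp add: scl_def vec_eq_iff)
lemma scl_2: "scl 2 y = y + y" by (simp add: scl_def vec_eq_iff)
lemma scl_minus: "y - scl p c = y + scl (-p) c" by (simp add: scl_def vec_eq_iff)

lemma BQ_sym: "BQ Q y z = BQ Q z y" by (simp add: BQ_def algebra_simps)

context fixes Q :: "int^'m \<Rightarrow> int" assumes quad: "is_quadratic_form Q"
begin
lemma BQ_add1: "BQ Q (y + z) w = BQ Q y w + BQ Q z w" using quad by (simp add: is_quadratic_form_def)
lemma Q_scl: "Q (scl k y) = k^2 * Q y" using quad by (simp add: is_quadratic_form_def)
lemma BQ_zero1: "BQ Q 0 w = 0" using BQ_add1[of 0 0 w] by simp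
lemma BQ_neg1: "BQ Q (-y) w = - BQ Q y w" using BQ_add1[of y "-y" w] BQ_zero1 by simp
lemma BQ_scl_nat: "BQ Q (scl (int m) y) w = int m * BQ Q y w"
  by (induction m) (simp_all add: scl_0 BQ_zero1 scl_add1 BQ_add1 algebra_simps)
lemma BQ_scl1: "BQ Q (scl k y) w = k * BQ Q y w"
proof (cases "k \<ge> 0")
  case True then show ?thesis using BQ_scl_nat[of "nat k"] by simp
next
  case False
  define m where "m = nat (-k)"
  have k: "k = - int m" using False by (simp add: m_def)
  have "BQ Q (scl k y) w = BQ Q (- scl (int m) y) w" by (simp add: k scl_neg)
  also have "\<dots> = - (int m * BQ Q y w)" by (simp add: BQ_neg1 BQ_scl_nat)
  finally show ?thesis by (simp add: k)
qed
lemma BQ_scl2: "BQ Q w (scl k y) = k * BQ Q w y"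
  using BQ_scl1 BQ_sym by metis
lemma BQ_sum1: "finite S \<Longrightarrow> BQ Q (sum f S) w = (\<Sum>k\<in>S. BQ Q (f k) w)"
  by (induction S rule: finite_induct) (simp_all add: BQ_zero1 BQ_add1)
lemma BQ_self: "BQ Q y y = 2 * Q y"
  using Q_scl[of 2 y] by (simp add: scl_2 BQ_def)
end

lemma tn_char:
  fixes Q :: "int^'m \<Rightarrow> int"
  assumes quad: "is_quadratic_form Q" and npos: "n \<ge> 1"
    and dv: "\<forall>z. t dvd BQ Q v z" and z0: "BQ Q v z0 = t \<or> BQ Q v z0 = -t"
    and v0: "v \<noteq> 0"
  shows "tnQ Q n v = n div gcd n t"
proof -
  define m where "m = n div gcd n t"
  have gp: "gcd n t > 0" using npos by simp
  have "n = gcd n t * m" unfolding m_def by simp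
  then have mpos: "m > 0" using gp npos by (metis zero_less_mult_iff order_less_le_trans zero_less_one less_le_not_le)
  have mem: "scl k v \<in> YQn Q n \<longleftrightarrow> m dvd k" for k
  proof -
    have "scl k v \<in> YQn Q n \<longleftrightarrow> (\<forall>z. n dvd k * BQ Q v z)"
      by (simp add: YQn_def BQ_scl1[OF quad])
    also have "\<dots> \<longleftrightarrow> n dvd k * t"
    proof
      assume "\<forall>z. n dvd k * BQ Q v z"
      then have "n dvd k * BQ Q v z0" by blast
      then show "n dvd k * t" using z0 by auto
    next
      assume h: "n dvd k * t"
      show "\<forall>z. n dvd k * BQ Q v z"
        using h dv by (meson dvd_trans mult_dvd_mono dvd_refl)
    qed
    also have "\<dots> \<longleftrightarrow> m dvd k" unfolding m_def by (rule dvd_div_gcd_iff[OF npos])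
    finally show ?thesis .
  qed
  have inj: "scl x v = scl y v \<Longrightarrow> x = y" for x y
  proof -
    assume h: "scl x v = scl y v"
    obtain i where "v $ i \<noteq> 0" using v0 by (metis vec_eq_iff zero_index)
    moreover have "x * v$i = y * v$i" using h by (metis scl_def vec_lambda_beta)
    ultimately show "x = y" by simp
  qed
  have P: "{scl k v | k. True} \<inter> YQn Q n = {scl (k * m') v | k. True} \<longleftrightarrow> m' = m" if "m' > 0" for m'
  proof
    assume h: "{scl k v | k. True} \<inter> YQn Q n = {scl (k * m') v | k. True}"
    have "scl m' v \<in> {scl (k * m') v | k. True}" by (metis (mono_tags, lifting) mem_Collect_eq mult_1)
    then have "scl m' v \<in> YQn Q n" using h by blast
    then have d1: "m dvd m'" using mem by blast
    have "scl m v \<in> {scl k v | k. True}" by blast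
    moreover have "scl m v \<in> YQn Q n" by (simp add: mem)
    ultimately have "scl m v \<in> {scl k v | k. True} \<inter> YQn Q n" by blast
    then obtain k where "scl m v = scl (k * m') v" using h by blast
    then have "m = k * m'" using inj by blast
    then have d2: "m' dvd m" by simp
    show "m' = m" using d1 d2 mpos that by (simp add: zdvd_antisym_nonneg)
  next
    assume "m' = m"
    show "{scl k v | k. True} \<inter> YQn Q n = {scl (k * m') v | k. True}"
      using mem \<open>m' = m\<close> by (auto simp: dvd_def mult.commute)
  qed
  have "tnQ Q n v = m"
    unfolding tnQ_def
  proof (rule the_equality)
    show "m > 0 \<and> {scl k v | k. True} \<inter> YQn Q n = {scl (k * m) v | k. True}" using P mpos by blast
  next
    fix m' assume "m' > 0 \<and> {scl k v | k. True} \<inter> YQn Q n = {scl (k * m') v | k. True}"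
    then show "m' = m" using P by blast
  qed
  then show ?thesis by (simp add: m_def)
qed

lemma row_cartan:
  assumes "1 \<le> w" "w \<le> r"
  shows "(\<Sum>k\<in>{1..r}. d k * cartanB r w k) =
    2 * d w - (if w \<ge> 2 then d (w-1) else 0) - (if w < r then (if w+1 = r then 2 else 1) * d (w+1) else 0)"
proof -
  have pt: "d k * cartanB r w k = (if k = w then 2 * d w else 0)
     + (if k = w+1 then - (if w+1 = r then 2 else 1) * d (w+1) else 0)
     + (if k = w-1 then - d (w-1) else 0)" for k
    using assms by (auto simp: cartanB_def)
  have m2: "(w+1 \<in> {1..r}) = (w < r)" and m3: "(w-1 \<in> {1..r}) = (2 \<le> w)" and m1: "w \<in> {1..r}"
    using assms by auto
  show ?thesis unfolding pt sum.distrib sum.delta[OF finite_atLeastAtMost] m2 m3 using m1 by simp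
qed

lemma row_ip:
  assumes "1 \<le> i" "i \<le> r"
  shows "(\<Sum>j\<in>{1..r}. b j * ipB r i j) =
    (if i = r then 1 else 2) * b i - (if i < r then b (i+1) else 0) - (if i \<ge> 2 then b (i-1) else 0)"
proof -
  have pt: "b j * ipB r i j = (if j = i then (if i = r then 1 else 2) * b i else 0)
     + (if j = i+1 then - b (i+1) else 0)
     + (if j = i-1 then - b (i-1) else 0)" for j
    using assms by (auto simp: ipB_def)
  have m2: "(i+1 \<in> {1..r}) = (i < r)" and m3: "(i-1 \<in> {1..r}) = (2 \<le> i)" and m1: "i \<in> {1..r}"
    using assms by auto
  show ?thesis unfolding pt sum.distrib sum.delta[OF finite_atLeastAtMost] m2 m3 using m1 by simp
qed

lemma sqnorm_row: "sqnormB r b = (\<Sum>i\<in>{1..r}. b i * ((if i = r then 1 else 2) * b i - (if i < r then b (i+1) else 0) - (if i \<ge> 2 then b (i-1) else 0)))"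
  unfolding sqnormB_def
proof (rule sum.cong[OF refl])
  fix i assume "i \<in> {1..r}"
  then have h: "(\<Sum>j\<in>{1..r}. b j * ipB r i j) = (if i = r then 1 else 2) * b i - (if i < r then b (i+1) else 0) - (if i \<ge> 2 then b (i-1) else 0)"
    by (intro row_ip) auto
  have "(\<Sum>j\<in>{1..r}. b i * b j * ipB r i j) = b i * (\<Sum>j\<in>{1..r}. b j * ipB r i j)"
    by (simp add: sum_distrib_left mult.assoc)
  then show "(\<Sum>j\<in>{1..r}. b i * b j * ipB r i j) = b i * ((if i = r then 1 else 2) * b i - (if i < r then b (i+1) else 0) - (if i \<ge> 2 then b (i-1) else 0))"
    using h by simp
qed

lemma sum_ind: assumes "1 \<le> i" "i \<le> j" "j \<le> r + 1"
  shows "(\<Sum>k\<in>{1..r}. (if i \<le> k \<and> k < j then 1 else 0) :: int) = int j - int i"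
proof -
  have se: "{k\<in>{1..r}. i \<le> k \<and> k < j} = {i..<j}" using assms by auto
  have "(\<Sum>k\<in>{1..r}. (if i \<le> k \<and> k < j then 1 else 0) :: int) = (\<Sum>k\<in>{k\<in>{1..r}. i \<le> k \<and> k < j}. 1)"
    by (rule sum.inter_filter[symmetric]) simp
  also have "\<dots> = (\<Sum>k\<in>{i..<j}. 1)" by (simp only: se)
  also have "\<dots> = int j - int i" using assms by simp
  finally show ?thesis .
qed

locale Bsetup =
  fixes r :: nat and n :: int and a c :: "nat \<Rightarrow> int^'m" and Q :: "int^'m \<Rightarrow> int"
  assumes r3: "r \<ge> 3"
    and npos: "n \<ge> 1"
    and cartan: "\<forall>i\<in>{1..r}. \<forall>j\<in>{1..r}. pair (a i) (c j) = cartanB r i j"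
    and quad: "is_quadratic_form Q"
    and winv: "\<forall>i\<in>{1..r}. \<forall>y. Q (srefl a c i y) = Q y"
begin

lemma F3_aux: assumes i: "i \<in> {1..r}"
  shows "pair (a i) z * BQ Q (c i) z = (pair (a i) z)^2 * Q (c i)"
proof -
  define p where "p = pair (a i) z"
  have "Q z = Q (srefl a c i z)" using winv i by simp
  also have "srefl a c i z = z + scl (-p) (c i)" by (simp add: srefl_def p_def scl_minus)
  also have "Q (z + scl (-p) (c i)) = Q z + Q (scl (-p) (c i)) + BQ Q z (scl (-p) (c i))"
    by (simp add: BQ_def)
  also have "\<dots> = Q z + p^2 * Q (c i) - p * BQ Q (c i) z"
    by (simp add: Q_scl[OF quad] BQ_scl2[OF quad] BQ_sym[of Q z])
  finally show ?thesis unfolding p_def[symmetric] by (auto simp: power2_eq_square)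
qed

lemma F3: assumes i: "i \<in> {1..r}"
  shows "BQ Q (c i) z = Q (c i) * pair (a i) z"
proof (cases "pair (a i) z = 0")
  case True
  have p2: "pair (a i) (z + c i) = 2" using True cartan i by (simp add: pair_add cartanB_def)
  have "2 * BQ Q (c i) (z + c i) = 4 * Q (c i)" using F3_aux[OF i, of "z + c i"] p2 by simp
  then have e: "BQ Q (c i) (z + c i) = 2 * Q (c i)" by simp
  have "BQ Q (c i) (z + c i) = BQ Q (c i) z + 2 * Q (c i)"
    by (simp add: BQ_sym[of Q "c i"] BQ_add1[OF quad] BQ_self[OF quad])
  then show ?thesis using e True by simp
next
  case False
  then show ?thesis using F3_aux[OF i, of z] by (simp add: power2_eq_square)
qed

lemma adj: assumes "1 \<le> k" "k + 1 \<le> r"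
  shows "Q (c k) * cartanB r k (k+1) = Q (c (k+1)) * cartanB r (k+1) k"
proof -
  have "BQ Q (c k) (c (k+1)) = Q (c k) * cartanB r k (k+1)" using F3[of k] cartan assms by simp
  moreover have "BQ Q (c (k+1)) (c k) = Q (c (k+1)) * cartanB r (k+1) k" using F3[of "k+1"] cartan assms by simp
  ultimately show ?thesis by (simp add: BQ_sym)
qed

lemma Qlong: "1 \<le> k \<Longrightarrow> k < r \<Longrightarrow> Q (c k) = Q (c 1)"
proof (induction k)
  case 0 then show ?case by simp
next
  case (Suc k)
  show ?case
  proof (cases "k = 0")
    case True then show ?thesis by simp
  next
    case False
    then have "Q (c k) = Q (c (k+1))" using adj[of k] Suc.prems by (simp add: cartanB_def)
    then show ?thesis using Suc False by simp
  qed
qed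

lemma Qshort: "Q (c r) = 2 * Q (c 1)"
proof -
  define s where "s = r - 1"
  have s: "r = s + 1" "s \<ge> 2" using r3 by (simp_all add: s_def)
  have "Q (c s) * cartanB r s (s+1) = Q (c (s+1)) * cartanB r (s+1) s"
    using adj[of s] s by simp
  then have "Q (c s) * 2 = Q (c r)" using s by (simp add: cartanB_def)
  then show ?thesis using Qlong[of s] s by simp
qed

definition q where "q = Q (c 1)"

lemma Qc: "k \<in> {1..r} \<Longrightarrow> Q (c k) = (if k = r then 2 else 1) * q"
proof (cases "k = r")
  case True then show ?thesis using Qshort by (simp add: q_def)
next
  case False
  assume "k \<in> {1..r}"
  then have "1 \<le> k" "k < r" using False by auto
  then have "Q (c k) = Q (c 1)" by (rule Qlong)
  then show ?thesis using False by (simp add: q_def)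
qed

lemma tn_c: assumes k: "k \<in> {1..r}" shows "tnQ Q n (c k) = nQ Q n (c k)"
proof -
  define w where "w = (if k \<ge> 2 then k - 1 else 2)"
  have w: "w \<in> {1..r}" using k r3 by (auto simp: w_def)
  have cw: "cartanB r k w = -1" using k r3 by (auto simp: w_def cartanB_def)
  have pw: "pair (a k) (c w) = -1" using cartan k w cw by simp
  have z0: "BQ Q (c k) (c w) = - Q (c k)" unfolding F3[OF k] pw by simp
  have dv: "\<forall>z. Q (c k) dvd BQ Q (c k) z" unfolding F3[OF k] by simp
  have z0': "BQ Q (c k) (c w) = Q (c k) \<or> BQ Q (c k) (c w) = - Q (c k)" using z0 by simp
  have ck: "c k \<noteq> 0"
  proof
    assume "c k = 0"
    then have "pair (a k) (c k) = 0" by (simp add: pair_zero)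
    moreover have "pair (a k) (c k) = cartanB r k k" using cartan k by blast
    ultimately show False by (simp add: cartanB_def)
  qed
  have "tnQ Q n (c k) = n div gcd n (Q (c k))"
    using tn_char[OF quad npos dv z0' ck] by simp
  then show ?thesis by (simp add: nQ_def)
qed

lemma tn_cvec:
  assumes dv: "\<forall>k\<in>{1..r}. t dvd d k * Q (c k)" and w: "w \<in> {1..r}"
    and R: "Q (c w) * (\<Sum>k\<in>{1..r}. d k * cartanB r w k) = t \<or> Q (c w) * (\<Sum>k\<in>{1..r}. d k * cartanB r w k) = -t"
    and R0: "(\<Sum>k\<in>{1..r}. d k * cartanB r w k) \<noteq> 0"
  shows "tnQ Q n (cvec r c d) = n div gcd n t"
proof (rule tn_char[OF quad npos])
  have pv: "pair (a w) (cvec r c d) = (\<Sum>k\<in>{1..r}. d k * cartanB r w k)"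
  proof -
    have "pair (a w) (cvec r c d) = (\<Sum>k\<in>{1..r}. d k * pair (a w) (c k))"
      unfolding cvec_def pair_sum pair_scl by (rule refl)
    also have "\<dots> = (\<Sum>k\<in>{1..r}. d k * cartanB r w k)"
      by (rule sum.cong[OF refl]) (use cartan w in simp)
    finally show ?thesis .
  qed
  show "\<forall>z. t dvd BQ Q (cvec r c d) z"
  proof
    fix z
    have "BQ Q (cvec r c d) z = (\<Sum>k\<in>{1..r}. BQ Q (scl (d k) (c k)) z)"
      unfolding cvec_def by (rule BQ_sum1[OF quad]) simp
    also have "\<dots> = (\<Sum>k\<in>{1..r}. d k * (Q (c k) * pair (a k) z))"
    proof (rule sum.cong[OF refl])
      fix k assume k: "k \<in> {1..r}"
      show "BQ Q (scl (d k) (c k)) z = d k * (Q (c k) * pair (a k) z)"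
        by (simp only: BQ_scl1[OF quad] F3[OF k])
    qed
    also have "t dvd \<dots>"
    proof (rule dvd_sum)
      fix k assume "k \<in> {1..r}"
      then have "t dvd d k * Q (c k)" using dv by blast
      then show "t dvd d k * (Q (c k) * pair (a k) z)" by (simp add: mult.assoc[symmetric])
    qed
    finally show "t dvd BQ Q (cvec r c d) z" .
  qed
  have "BQ Q (cvec r c d) (c w) = BQ Q (c w) (cvec r c d)" by (rule BQ_sym)
  also have "\<dots> = Q (c w) * pair (a w) (cvec r c d)" by (rule F3[OF w])
  finally have "BQ Q (cvec r c d) (c w) = Q (c w) * pair (a w) (cvec r c d)" .
  then show "BQ Q (cvec r c d) (c w) = t \<or> BQ Q (cvec r c d) (c w) = -t" using R pv by simp
  show "cvec r c d \<noteq> 0" using R0 pv by (auto simp: pair_zero)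
qed

end

definition dI :: "nat \<Rightarrow> nat \<Rightarrow> nat \<Rightarrow> int" where
  "dI i j = (\<lambda>k. if i \<le> k \<and> k < j then 1 else 0)"
definition dII :: "nat \<Rightarrow> nat \<Rightarrow> nat \<Rightarrow> nat \<Rightarrow> int" where
  "dII r i j = (\<lambda>k. if i \<le> k \<and> k < j then 1 else if j \<le> k \<and> k < r then 2 else if k = r then 1 else 0)"
definition dIII :: "nat \<Rightarrow> nat \<Rightarrow> nat \<Rightarrow> int" where
  "dIII r i = (\<lambda>k. if i \<le> k \<and> k < r then 2 else if k = r then 1 else 0)"
definition bI :: "nat \<Rightarrow> nat \<Rightarrow> nat \<Rightarrow> int" where
  "bI r i = (\<lambda>k. if i \<le> k \<and> k \<le> r then 1 else 0)"
definition bIII :: "nat \<Rightarrow> nat \<Rightarrow> nat \<Rightarrow> nat \<Rightarrow> int" where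
  "bIII r i j = (\<lambda>k. if i \<le> k \<and> k < j then 1 else if j \<le> k \<and> k \<le> r then 2 else 0)"

lemma PhivI_eq: "PhivI r = {dI i j | i j. 1 \<le> i \<and> i < j \<and> j \<le> r}" by (simp add: PhivI_def dI_def)
lemma PhiII_eq: "PhiII r = {dI i j | i j. 1 \<le> i \<and> i < j \<and> j \<le> r}" by (simp add: PhiII_def dI_def)
lemma PhivII_eq: "PhivII r = {dII r i j | i j. 1 \<le> i \<and> i < j \<and> j \<le> r}" by (simp add: PhivII_def dII_def)
lemma PhiIII_eq: "PhiIII r = {bIII r i j | i j. 1 \<le> i \<and> i < j \<and> j \<le> r}" by (simp add: PhiIII_def bIII_def)
lemma PhivIII_eq: "PhivIII r = {dIII r i | i. 1 \<le> i \<and> i \<le> r}" by (simp add: PhivIII_def dIII_def)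
lemma PhiI_eq: "PhiI r = {bI r i | i. 1 \<le> i \<and> i \<le> r}" by (simp add: PhiI_def bI_def)

lemma sum_delta2: "(\<Sum>k\<in>{1..(r::nat)}. (if k = x then u else 0) + (if k = y then v else 0) :: int)
   = (if x \<in> {1..r} then u else 0) + (if y \<in> {1..r} then v else 0)"
  unfolding sum.distrib sum.delta[OF finite_atLeastAtMost] by (rule refl)

lemma sum_delta3: "(\<Sum>k\<in>{1..(r::nat)}. (if k = x then u else 0) - (if k = y then v else 0) + (if k = z then w else 0) :: int)
   = (if x \<in> {1..r} then u else 0) - (if y \<in> {1..r} then v else 0) + (if z \<in> {1..r} then w else 0)"
  unfolding sum.distrib sum_subtractf sum.delta[OF finite_atLeastAtMost] by (rule refl)

context Bsetup begin

abbreviation "L \<equiv> nQ Q n (c 1)"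
abbreviation "S \<equiv> nQ Q n (c r)"

lemma nQ_c: "k \<in> {1..r} \<Longrightarrow> nQ Q n (c k) = (if k = r then S else L)"
proof -
  assume k: "k \<in> {1..r}"
  have "Q (c k) = (if k = r then Q (c r) else Q (c 1))"
    using Qc[OF k] Qc[of r] Qc[of 1] r3 by simp
  then show ?thesis unfolding nQ_def by simp
qed

lemma fX_formula: "fX r c Q n d = of_int (\<Sum>k\<in>{1..r}. if k < r then d k else 0) / of_int L + of_int (d r) / of_int S"
proof -
  have "fX r c Q n d = (\<Sum>k\<in>{1..r}. of_int (if k < r then d k else 0) / of_int L + (if k = r then of_int (d r) / of_int S else 0))"
    unfolding fX_def
  proof (rule sum.cong[OF refl])
    fix k assume k: "k \<in> {1..r}"
    then show "of_int (d k) / of_int (tnQ Q n (c k)) = of_int (if k < r then d k else 0) / of_int L + (if k = r then of_int (d r) / of_int S else (0::rat))"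
      using tn_c[OF k] nQ_c[OF k] by auto
  qed
  also have "\<dots> = (\<Sum>k\<in>{1..r}. of_int (if k < r then d k else 0)) / of_int L + of_int (d r) / of_int S"
    using r3 by (simp add: sum.distrib sum_divide_distrib)
  finally show ?thesis by (simp only: of_int_sum)
qed

lemma Qdvd: "k \<in> {1..r} \<Longrightarrow> q dvd x * Q (c k)"
  using Qc[of k] by simp

lemma tnI: assumes ij: "1 \<le> i" "i < j" "j \<le> r"
  shows "tnQ Q n (cvec r c (dI i j)) = L"
proof -
  have dv: "\<forall>k\<in>{1..r}. q dvd dI i j k * Q (c k)" using Qdvd by blast
  have L: "L = n div gcd n q" by (simp add: nQ_def q_def)
  consider "i \<ge> 2" | "i = 1" "j < r" | "i = 1" "j = r" using ij by linarith
  then show ?thesis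
  proof cases
    case 1
    have wle: "1 \<le> i - 1" "i - 1 \<le> r" using 1 ij by auto
    then have w: "i - 1 \<in> {1..r}" by auto
    have R: "(\<Sum>k\<in>{1..r}. dI i j k * cartanB r (i-1) k) = -1"
      unfolding row_cartan[OF wle] using 1 ij by (simp add: dI_def; arith?)
    have ne: "i-1 \<noteq> r" using ij by arith
    have Qw: "Q (c (i-1)) = q" using Qc[OF w] ne by simp
    show ?thesis unfolding L by (rule tn_cvec[OF dv w]) (simp_all only: R Qw, simp_all)
  next
    case 2
    have wle: "1 \<le> j" "j \<le> r" using 2 ij by auto
    then have w: "j \<in> {1..r}" by auto
    have R: "(\<Sum>k\<in>{1..r}. dI i j k * cartanB r j k) = -1"
      unfolding row_cartan[OF wle] using 2 ij by (simp add: dI_def; arith?)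
    have Qw: "Q (c j) = q" using Qc[OF w] 2 by simp
    show ?thesis unfolding L by (rule tn_cvec[OF dv w]) (simp_all only: R Qw, simp_all)
  next
    case 3
    have wle: "1 \<le> r - 1" "r - 1 \<le> r" using 3 ij by auto
    then have w: "r - 1 \<in> {1..r}" by auto
    have R: "(\<Sum>k\<in>{1..r}. dI i j k * cartanB r (r-1) k) = 1"
      unfolding row_cartan[OF wle] using 3 ij r3 by (simp add: dI_def; arith?)
    have ne: "r - 1 \<noteq> r" using r3 by arith
    have Qw: "Q (c (r-1)) = q" using Qc[OF w] ne by simp
    show ?thesis unfolding L by (rule tn_cvec[OF dv w]) (simp_all only: R Qw, simp_all)
  qed
qed

lemma tnII: assumes ij: "1 \<le> i" "i < j" "j \<le> r"
  shows "tnQ Q n (cvec r c (dII r i j)) = L"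
proof -
  have dv: "\<forall>k\<in>{1..r}. q dvd dII r i j k * Q (c k)" using Qdvd by blast
  have L: "L = n div gcd n q" by (simp add: nQ_def q_def)
  consider "i \<ge> 2" | "i = 1" "j \<ge> 3" | "i = 1" "j = 2" using ij by linarith
  then show ?thesis
  proof cases
    case 1
    have wle: "1 \<le> i - 1" "i - 1 \<le> r" using 1 ij by auto
    then have w: "i - 1 \<in> {1..r}" by auto
    have R: "(\<Sum>k\<in>{1..r}. dII r i j k * cartanB r (i-1) k) = -1"
      unfolding row_cartan[OF wle] using 1 ij by (simp add: dII_def; arith?)
    have ne: "i-1 \<noteq> r" using ij by arith
    have Qw: "Q (c (i-1)) = q" using Qc[OF w] ne by simp
    show ?thesis unfolding L by (rule tn_cvec[OF dv w]) (simp_all only: R Qw, simp_all)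
  next
    case 2
    have wle: "1 \<le> j - 1" "j - 1 \<le> r" using 2 ij by auto
    then have w: "j - 1 \<in> {1..r}" by auto
    have R: "(\<Sum>k\<in>{1..r}. dII r i j k * cartanB r (j-1) k) = -1"
      unfolding row_cartan[OF wle] using 2 ij by (simp add: dII_def; arith?)
    have ne: "j - 1 \<noteq> r" using 2 ij by arith
    have Qw: "Q (c (j-1)) = q" using Qc[OF w] ne by simp
    show ?thesis unfolding L by (rule tn_cvec[OF dv w]) (simp_all only: R Qw, simp_all)
  next
    case 3
    have wle: "1 \<le> (2::nat)" "2 \<le> r" using r3 by auto
    then have w: "2 \<in> {1..r}" by auto
    have R: "(\<Sum>k\<in>{1..r}. dII r i j k * cartanB r 2 k) = 1"
      unfolding row_cartan[OF wle] using 3 r3 by (simp add: dII_def; arith?)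
    have Qw: "Q (c 2) = q" using Qc[OF w] r3 by simp
    show ?thesis unfolding L by (rule tn_cvec[OF dv w]) (simp_all only: R Qw, simp_all)
  qed
qed

lemma tnIII: assumes i: "1 \<le> i" "i \<le> r"
  shows "tnQ Q n (cvec r c (dIII r i)) = S"
proof -
  have dv: "\<forall>k\<in>{1..r}. 2 * q dvd dIII r i k * Q (c k)"
  proof
    fix k assume k: "k \<in> {1..r}"
    show "2 * q dvd dIII r i k * Q (c k)"
      using Qc[OF k] by (auto simp: dIII_def)
  qed
  have S: "S = n div gcd n (2 * q)" using Qc[of r] r3 by (simp add: nQ_def)
  consider "i \<ge> 2" | "i = 1" using i by linarith
  then show ?thesis
  proof cases
    case 1
    have wle: "1 \<le> i - 1" "i - 1 \<le> r" using 1 i by auto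
    then have w: "i - 1 \<in> {1..r}" by auto
    have R: "(\<Sum>k\<in>{1..r}. dIII r i k * cartanB r (i-1) k) = -2"
      unfolding row_cartan[OF wle] using 1 i by (simp add: dIII_def; arith?)
    have ne: "i-1 \<noteq> r" using i 1 by arith
    have Qw: "Q (c (i-1)) = q" using Qc[OF w] ne by simp
    show ?thesis unfolding S by (rule tn_cvec[OF dv w]) (simp_all only: R Qw, simp_all)
  next
    case 2
    have wle: "1 \<le> (1::nat)" "1 \<le> r" using r3 by auto
    then have w: "1 \<in> {1..r}" by auto
    have R: "(\<Sum>k\<in>{1..r}. dIII r i k * cartanB r 1 k) = 2"
      unfolding row_cartan[OF wle] using 2 r3 by (simp add: dIII_def; arith?)
    have Qw: "Q (c 1) = q" by (simp add: q_def)
    show ?thesis unfolding S by (rule tn_cvec[OF dv w]) (simp_all only: R Qw, simp_all)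
  qed
qed

end

abbreviation rowe :: "nat \<Rightarrow> (nat \<Rightarrow> int) \<Rightarrow> nat \<Rightarrow> int" where
  "rowe r b i \<equiv> (if i = r then 1 else 2) * b i - (if i < r then b (i+1) else 0) - (if i \<ge> 2 then b (i-1) else 0)"

lemma sqII: assumes "1 \<le> i" "i < j" "j \<le> r" shows "sqnormB r (dI i j) = 2"
proof -
  have "sqnormB r (dI i j) = (\<Sum>k\<in>{1..r}. (if k = i then 1 else 0) + (if k = j - 1 then 1 else 0))"
    unfolding sqnorm_row
  proof (rule sum.cong[OF refl])
    fix k assume "k \<in> {1..r}"
    then show "dI i j k * rowe r (dI i j) k = (if k = i then 1 else 0) + (if k = j - 1 then 1 else 0)"
      using assms by (simp add: dI_def; arith?)
  qed
  also have "\<dots> = 2" unfolding sum_delta2 using assms by (simp; arith?)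
  finally show ?thesis .
qed

lemma sqIII: assumes "1 \<le> i" "i < j" "j \<le> r" shows "sqnormB r (bIII r i j) = 2"
proof -
  have "sqnormB r (bIII r i j) = (\<Sum>k\<in>{1..r}. (if k = i then 1 else 0) - (if k = j - 1 then 1 else 0) + (if k = j then 2 else 0))"
    unfolding sqnorm_row
  proof (rule sum.cong[OF refl])
    fix k assume "k \<in> {1..r}"
    then show "bIII r i j k * rowe r (bIII r i j) k = (if k = i then 1 else 0) - (if k = j - 1 then 1 else 0) + (if k = j then 2 else 0)"
      using assms by (simp add: bIII_def; arith?)
  qed
  also have "\<dots> = 2" unfolding sum_delta3 using assms by (simp; arith?)
  finally show ?thesis .
qed

lemma sqI: assumes "1 \<le> i" "i \<le> r" shows "sqnormB r (bI r i) = 1"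
proof -
  have "sqnormB r (bI r i) = (\<Sum>k\<in>{1..r}. (if k = i then 1 else 0))"
    unfolding sqnorm_row
  proof (rule sum.cong[OF refl])
    fix k assume "k \<in> {1..r}"
    then show "bI r i k * rowe r (bI r i) k = (if k = i then 1 else 0)"
      using assms by (simp add: bI_def; arith?)
  qed
  also have "\<dots> = 1" using assms by simp
  finally show ?thesis .
qed

lemma ccI: assumes "1 \<le> i" "i < j" "j \<le> r" "k \<in> {1..r}"
  shows "coroot_coeff r (dI i j) k = dI i j k"
  unfolding coroot_coeff_def sqII[OF assms(1-3)] using assms by (simp add: dI_def ipB_def)

lemma ccIII: assumes "1 \<le> i" "i < j" "j \<le> r" "k \<in> {1..r}"
  shows "coroot_coeff r (bIII r i j) k = dII r i j k"
  unfolding coroot_coeff_def sqIII[OF assms(1-3)] using assms by (simp add: bIII_def dII_def ipB_def; arith?)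

lemma ccI': assumes "1 \<le> i" "i \<le> r" "k \<in> {1..r}"
  shows "coroot_coeff r (bI r i) k = dIII r i k"
  unfolding coroot_coeff_def sqI[OF assms(1-2)] using assms by (simp add: bI_def dIII_def ipB_def; arith?)

lemma cvec_cong: "(\<And>k. k \<in> {1..r} \<Longrightarrow> d k = d' k) \<Longrightarrow> cvec r c d = cvec r c d'"
  unfolding cvec_def by (rule sum.cong) simp_all

lemma htI: assumes "1 \<le> i" "i < j" "j \<le> r" shows "(\<Sum>k\<in>{1..r}. dI i j k) = int j - int i"
  unfolding dI_def using sum_ind[of i j r] assms by simp

lemma htIII: assumes "1 \<le> i" "i < j" "j \<le> r"
  shows "(\<Sum>k\<in>{1..r}. bIII r i j k) = int j - int i + 2 * (int r + 1 - int j)"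
proof -
  have "(\<Sum>k\<in>{1..r}. bIII r i j k) = (\<Sum>k\<in>{1..r}. (if i \<le> k \<and> k < j then 1 else 0) + 2 * (if j \<le> k \<and> k < r + 1 then 1 else 0))"
    by (rule sum.cong[OF refl]) (simp add: bIII_def)
  also have "\<dots> = (\<Sum>k\<in>{1..r}. (if i \<le> k \<and> k < j then 1 else 0)) + 2 * (\<Sum>k\<in>{1..r}. (if j \<le> k \<and> k < r + 1 then 1 else 0))"
    by (simp only: sum.distrib sum_distrib_left)
  also have "\<dots> = int j - int i + 2 * (int (r + 1) - int j)"
    using sum_ind[of i j r] sum_ind[of j "r+1" r] assms by simp
  finally show ?thesis by simp
qed

lemma htI': assumes "1 \<le> i" "i \<le> r" shows "(\<Sum>k\<in>{1..r}. bI r i k) = int r + 1 - int i"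
proof -
  have "(\<Sum>k\<in>{1..r}. bI r i k) = (\<Sum>k\<in>{1..r}. (if i \<le> k \<and> k < r + 1 then 1 else 0))"
    by (rule sum.cong[OF refl]) (auto simp: bI_def)
  also have "\<dots> = int (r + 1) - int i" using sum_ind[of i "r+1" r] assms by simp
  finally show ?thesis by simp
qed

lemma lsI: assumes "1 \<le> i" "i < j" "j \<le> r" shows "(\<Sum>k\<in>{1..r}. if k < r then dI i j k else 0) = int j - int i"
proof -
  have "(\<Sum>k\<in>{1..r}. if k < r then dI i j k else 0) = (\<Sum>k\<in>{1..r}. dI i j k)"
    by (rule sum.cong[OF refl]) (use assms in \<open>simp add: dI_def\<close>)
  then show ?thesis using htI[OF assms] by simp
qed

lemma lsII: assumes "1 \<le> i" "i < j" "j \<le> r"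
  shows "(\<Sum>k\<in>{1..r}. if k < r then dII r i j k else 0) = int j - int i + 2 * (int r - int j)"
proof -
  have "(\<Sum>k\<in>{1..r}. if k < r then dII r i j k else 0) = (\<Sum>k\<in>{1..r}. (if i \<le> k \<and> k < j then 1 else 0) + 2 * (if j \<le> k \<and> k < r then 1 else 0))"
    by (rule sum.cong[OF refl]) (use assms in \<open>simp add: dII_def\<close>)
  also have "\<dots> = (\<Sum>k\<in>{1..r}. (if i \<le> k \<and> k < j then 1 else 0)) + 2 * (\<Sum>k\<in>{1..r}. (if j \<le> k \<and> k < r then 1 else 0))"
    by (simp only: sum.distrib sum_distrib_left)
  also have "\<dots> = int j - int i + 2 * (int r - int j)"
    using sum_ind[of i j r] sum_ind[of j r r] assms by simp
  finally show ?thesis .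
qed

lemma lsIII: assumes "1 \<le> i" "i \<le> r"
  shows "(\<Sum>k\<in>{1..r}. if k < r then dIII r i k else 0) = 2 * (int r - int i)"
proof -
  have "(\<Sum>k\<in>{1..r}. if k < r then dIII r i k else 0) = (\<Sum>k\<in>{1..r}. 2 * (if i \<le> k \<and> k < r then 1 else 0))"
    by (rule sum.cong[OF refl]) (use assms in \<open>simp add: dIII_def\<close>)
  also have "\<dots> = 2 * (\<Sum>k\<in>{1..r}. (if i \<le> k \<and> k < r then 1 else 0))"
    by (simp only: sum_distrib_left)
  also have "\<dots> = 2 * (int r - int i)"
    using sum_ind[of i r r] assms by simp
  finally show ?thesis .
qed

context Bsetup begin

lemma fX_I: assumes "1 \<le> i" "i < j" "j \<le> r"
  shows "fX r c Q n (dI i j) = of_int (int j - int i) / of_int L"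
  unfolding fX_formula lsI[OF assms] using assms by (simp add: dI_def)

lemma fX_II: assumes "1 \<le> i" "i < j" "j \<le> r"
  shows "fX r c Q n (dII r i j) = of_int (int j - int i + 2 * (int r - int j)) / of_int L + 1 / of_int S"
  unfolding fX_formula lsII[OF assms] using assms by (simp add: dII_def)

lemma fX_III: assumes "1 \<le> i" "i \<le> r"
  shows "fX r c Q n (dIII r i) = of_int (2 * (int r - int i)) / of_int L + 1 / of_int S"
  unfolding fX_formula lsIII[OF assms] using assms by (simp add: dIII_def)

lemma fY_II: assumes "1 \<le> i" "i < j" "j \<le> r"
  shows "fY r c Q n (dI i j) = of_int (int j - int i) / of_int L"
proof -
  have "cvec r c (coroot_coeff r (dI i j)) = cvec r c (dI i j)"
    by (rule cvec_cong) (rule ccI[OF assms])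
  then show ?thesis unfolding fY_def htI[OF assms] using tnI[OF assms] by simp
qed

lemma fY_III: assumes "1 \<le> i" "i < j" "j \<le> r"
  shows "fY r c Q n (bIII r i j) = of_int (int j - int i + 2 * (int r + 1 - int j)) / of_int L"
proof -
  have "cvec r c (coroot_coeff r (bIII r i j)) = cvec r c (dII r i j)"
    by (rule cvec_cong) (rule ccIII[OF assms])
  then show ?thesis unfolding fY_def htIII[OF assms] using tnII[OF assms] by simp
qed

lemma fY_I: assumes "1 \<le> i" "i \<le> r"
  shows "fY r c Q n (bI r i) = of_int (int r + 1 - int i) / of_int S"
proof -
  have "cvec r c (coroot_coeff r (bI r i)) = cvec r c (dIII r i)"
    by (rule cvec_cong) (rule ccI'[OF assms])
  then show ?thesis unfolding fY_def htI'[OF assms] using tnIII[OF assms] by simp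
qed

end

lemma N1: assumes r3: "(r::nat) \<ge> 3"
  shows "{int j - int i | i j. 1 \<le> i \<and> i < j \<and> j \<le> r}
       \<union> {int j - int i + 2 * (int r + 1 - int j) | i j. 1 \<le> i \<and> i < j \<and> j \<le> r}
       \<union> {2 * (int r + 1 - int i) | i. 1 \<le> i \<and> i \<le> r} = {1..2 * int r}"
proof
  show "{int j - int i | i j. 1 \<le> i \<and> i < j \<and> j \<le> r}
       \<union> {int j - int i + 2 * (int r + 1 - int j) | i j. 1 \<le> i \<and> i < j \<and> j \<le> r}
       \<union> {2 * (int r + 1 - int i) | i. 1 \<le> i \<and> i \<le> r} \<subseteq> {1..2 * int r}"
    by auto
next
  show "{1..2 * int r} \<subseteq> {int j - int i | i j. 1 \<le> i \<and> i < j \<and> j \<le> r}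
       \<union> {int j - int i + 2 * (int r + 1 - int j) | i j. 1 \<le> i \<and> i < j \<and> j \<le> r}
       \<union> {2 * (int r + 1 - int i) | i. 1 \<le> i \<and> i \<le> r}"
  proof
    fix k assume k: "k \<in> {1..2 * int r}"
    consider "k \<le> int r - 1" | "k \<ge> int r" "even k" | "k \<ge> int r" "odd k" "k \<le> int r + 1" | "k \<ge> int r + 2" "odd k"
      by linarith
    then show "k \<in> {int j - int i | i j. 1 \<le> i \<and> i < j \<and> j \<le> r}
       \<union> {int j - int i + 2 * (int r + 1 - int j) | i j. 1 \<le> i \<and> i < j \<and> j \<le> r}
       \<union> {2 * (int r + 1 - int i) | i. 1 \<le> i \<and> i \<le> r}"
    proof cases
      case 1
      have "k = int (nat k + 1) - int 1 \<and> 1 \<le> (1::nat) \<and> 1 < nat k + 1 \<and> nat k + 1 \<le> r" using 1 k by auto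
      then show ?thesis by blast
    next
      case 2
      then obtain m where m: "k = 2 * m" by (auto elim: evenE)
      have "k = 2 * (int r + 1 - int (nat (int r + 1 - m))) \<and> 1 \<le> nat (int r + 1 - m) \<and> nat (int r + 1 - m) \<le> r"
        using 2 k m r3 by auto
      then show ?thesis by blast
    next
      case 3
      have "k = int r - int (nat (int r + 2 - k)) + 2 * (int r + 1 - int r) \<and> 1 \<le> nat (int r + 2 - k) \<and> nat (int r + 2 - k) < r \<and> r \<le> r"
        using 3 k r3 by auto
      then show ?thesis by blast
    next
      case 4
      then obtain m where m: "k = 2 * m + 1" by (auto elim: oddE)
      have "k = int (nat (2 * int r + 1 - k)) - int 1 + 2 * (int r + 1 - int (nat (2 * int r + 1 - k))) \<and> 1 \<le> (1::nat) \<and> 1 < nat (2 * int r + 1 - k) \<and> nat (2 * int r + 1 - k) \<le> r"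
        using 4 k m r3 by (auto; arith)
      then show ?thesis by blast
    qed
  qed
qed

lemma N2: assumes r3: "(r::nat) \<ge> 3"
  shows "{int j - int i | i j. 1 \<le> i \<and> i < j \<and> j \<le> r}
       \<union> {int j - int i + 2 * (int r - int j) + 1 | i j. 1 \<le> i \<and> i < j \<and> j \<le> r}
       \<union> {2 * (int r - int i) + 1 | i. 1 \<le> i \<and> i \<le> r} = {1..2 * int r - 1}"
proof
  show "{int j - int i | i j. 1 \<le> i \<and> i < j \<and> j \<le> r}
       \<union> {int j - int i + 2 * (int r - int j) + 1 | i j. 1 \<le> i \<and> i < j \<and> j \<le> r}
       \<union> {2 * (int r - int i) + 1 | i. 1 \<le> i \<and> i \<le> r} \<subseteq> {1..2 * int r - 1}"
    by auto
next
  show "{1..2 * int r - 1} \<subseteq> {int j - int i | i j. 1 \<le> i \<and> i < j \<and> j \<le> r}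
       \<union> {int j - int i + 2 * (int r - int j) + 1 | i j. 1 \<le> i \<and> i < j \<and> j \<le> r}
       \<union> {2 * (int r - int i) + 1 | i. 1 \<le> i \<and> i \<le> r}"
  proof
    fix k assume k: "k \<in> {1..2 * int r - 1}"
    consider "k \<le> int r - 1" | "odd k" | "k \<ge> int r" "even k" "k \<le> int r" | "k \<ge> int r + 1" "even k"
      by linarith
    then show "k \<in> {int j - int i | i j. 1 \<le> i \<and> i < j \<and> j \<le> r}
       \<union> {int j - int i + 2 * (int r - int j) + 1 | i j. 1 \<le> i \<and> i < j \<and> j \<le> r}
       \<union> {2 * (int r - int i) + 1 | i. 1 \<le> i \<and> i \<le> r}"
    proof cases
      case 1
      have "k = int (nat k + 1) - int 1 \<and> 1 \<le> (1::nat) \<and> 1 < nat k + 1 \<and> nat k + 1 \<le> r" using 1 k by auto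
      then show ?thesis by blast
    next
      case 2
      then obtain m where m: "k = 2 * m + 1" by (auto elim: oddE)
      have "k = 2 * (int r - int (nat (int r - m))) + 1 \<and> 1 \<le> nat (int r - m) \<and> nat (int r - m) \<le> r"
        using 2 k m r3 by auto
      then show ?thesis by blast
    next
      case 3
      then obtain m where m: "k = 2 * m" by (auto elim: evenE)
      have "k = int r - int (nat (int r + 1 - k)) + 2 * (int r - int r) + 1 \<and> 1 \<le> nat (int r + 1 - k) \<and> nat (int r + 1 - k) < r \<and> r \<le> r"
        using 3 k m r3 by auto
      then show ?thesis by blast
    next
      case 4
      then obtain m where m: "k = 2 * m" by (auto elim: evenE)
      have "k = int (nat (2 * int r - k)) - int 1 + 2 * (int r - int (nat (2 * int r - k))) + 1 \<and> 1 \<le> (1::nat) \<and> 1 < nat (2 * int r - k) \<and> nat (2 * int r - k) \<le> r"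
        using 4 k m r3 by auto
      then show ?thesis by blast
    qed
  qed
qed

lemma N3: assumes r3: "(r::nat) \<ge> 3"
  shows "{int r + 1 - int i | i. 1 \<le> i \<and> i \<le> r}
       \<union> {int j - int i | i j. 1 \<le> i \<and> i < j \<and> j \<le> r}
       \<union> {int j - int i + 2 * (int r + 1 - int j) | i j. 1 \<le> i \<and> i < j \<and> j \<le> r} = {1..2 * int r - 1}"
proof
  show "{int r + 1 - int i | i. 1 \<le> i \<and> i \<le> r}
       \<union> {int j - int i | i j. 1 \<le> i \<and> i < j \<and> j \<le> r}
       \<union> {int j - int i + 2 * (int r + 1 - int j) | i j. 1 \<le> i \<and> i < j \<and> j \<le> r} \<subseteq> {1..2 * int r - 1}"
    by auto
next
  show "{1..2 * int r - 1} \<subseteq> {int r + 1 - int i | i. 1 \<le> i \<and> i \<le> r}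
       \<union> {int j - int i | i j. 1 \<le> i \<and> i < j \<and> j \<le> r}
       \<union> {int j - int i + 2 * (int r + 1 - int j) | i j. 1 \<le> i \<and> i < j \<and> j \<le> r}"
  proof
    fix k assume k: "k \<in> {1..2 * int r - 1}"
    consider "k \<le> int r" | "k \<ge> int r + 1" by linarith
    then show "k \<in> {int r + 1 - int i | i. 1 \<le> i \<and> i \<le> r}
       \<union> {int j - int i | i j. 1 \<le> i \<and> i < j \<and> j \<le> r}
       \<union> {int j - int i + 2 * (int r + 1 - int j) | i j. 1 \<le> i \<and> i < j \<and> j \<le> r}"
    proof cases
      case 1
      have "k = int r + 1 - int (nat (int r + 1 - k)) \<and> 1 \<le> nat (int r + 1 - k) \<and> nat (int r + 1 - k) \<le> r"
        using 1 k by auto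
      then show ?thesis by blast
    next
      case 2
      have "k = int (nat (2 * int r + 1 - k)) - int 1 + 2 * (int r + 1 - int (nat (2 * int r + 1 - k))) \<and> 1 \<le> (1::nat) \<and> 1 < nat (2 * int r + 1 - k) \<and> nat (2 * int r + 1 - k) \<le> r"
        using 2 k r3 by auto
      then show ?thesis by blast
    qed
  qed
qed

lemma img2: "f ` {g i j | i j. P i j} = {f (g i j) | i j. P i j}" by blast
lemma img1: "f ` {g i | i. P i} = {f (g i) | i. P i}" by blast
lemma coll2_cong: assumes "\<And>i j. P i j \<Longrightarrow> f i j = g i j" shows "{f i j | i j. P i j} = {g i j | i j. P i j}"
proof (rule Collect_cong)
  fix x show "(\<exists>i j. x = f i j \<and> P i j) = (\<exists>i j. x = g i j \<and> P i j)" using assms by metis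
qed
lemma coll1_cong: assumes "\<And>i. P i \<Longrightarrow> f i = g i" shows "{f i | i. P i} = {g i | i. P i}"
proof (rule Collect_cong)
  fix x show "(\<exists>i. x = f i \<and> P i) = (\<exists>i. x = g i \<and> P i)" using assms by metis
qed

lemma nQ_pos: "(n::int) \<ge> 1 \<Longrightarrow> nQ Q n y > 0"
proof -
  assume n: "n \<ge> 1"
  have gp: "gcd n (Q y) > 0" using n by simp
  have "n = gcd n (Q y) * (n div gcd n (Q y))" by simp
  then have "0 < gcd n (Q y) * (n div gcd n (Q y))" using n by linarith
  then show ?thesis unfolding nQ_def using gp zero_less_mult_pos by blast
qed

context Bsetup begin

lemma Spos: "S > 0" using nQ_pos[OF npos] by blast
lemma Lpos: "L > 0" using nQ_pos[OF npos] by blast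

lemma case1:
  assumes H: "\<forall>i\<in>{1..<r}. nQ Q n (c i) = 2 * nQ Q n (c r)"
  shows "fX r c Q n ` PhivI r = fY r c Q n ` PhiII r \<and>
        fX r c Q n ` PhivII r = fY r c Q n ` PhiIII r \<and>
        fX r c Q n ` PhivIII r = fY r c Q n ` PhiI r \<and>
        fX r c Q n ` PhivPos r = (\<lambda>k. of_int k / of_int (2 * nQ Q n (c r))) ` {1..2 * int r} \<and>
        fY r c Q n ` PhiPos r = (\<lambda>k. of_int k / of_int (2 * nQ Q n (c r))) ` {1..2 * int r}"
proof -
  have LS: "L = 2 * S" using H r3 by auto
  have LS': "nQ Q n (c (Suc 0)) = 2 * S" using LS by simp
  have S0: "(of_int S :: rat) \<noteq> 0" using Spos by simp
  define h where "h = (\<lambda>k::int. (of_int k / of_int (2 * S) :: rat))"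
  define A where "A = {int j - int i | i j. 1 \<le> i \<and> i < j \<and> j \<le> r}"
  define B where "B = {int j - int i + 2 * (int r + 1 - int j) | i j. 1 \<le> i \<and> i < j \<and> j \<le> r}"
  define C where "C = {2 * (int r + 1 - int i) | i. 1 \<le> i \<and> i \<le> r}"
  have XI: "fX r c Q n ` PhivI r = h ` A"
    unfolding PhivI_eq A_def img2 by (rule coll2_cong) (simp add: fX_I h_def LS LS')
  have YII: "fY r c Q n ` PhiII r = h ` A"
    unfolding PhiII_eq A_def img2 by (rule coll2_cong) (simp add: fY_II h_def LS LS')
  have XII: "fX r c Q n ` PhivII r = h ` B"
    unfolding PhivII_eq B_def img2
  proof (rule coll2_cong)
    fix i j assume "1 \<le> i \<and> i < j \<and> j \<le> r"
    then show "fX r c Q n (dII r i j) = h (int j - int i + 2 * (int r + 1 - int j))"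
      using S0 by (simp add: fX_II h_def LS LS' field_simps)
  qed
  have YIII: "fY r c Q n ` PhiIII r = h ` B"
    unfolding PhiIII_eq B_def img2 by (rule coll2_cong) (simp add: fY_III h_def LS LS')
  have XIII: "fX r c Q n ` PhivIII r = h ` C"
    unfolding PhivIII_eq C_def img1
  proof (rule coll1_cong)
    fix i assume "1 \<le> i \<and> i \<le> r"
    then show "fX r c Q n (dIII r i) = h (2 * (int r + 1 - int i))"
      using S0 by (simp add: fX_III h_def LS LS' field_simps)
  qed
  have YI: "fY r c Q n ` PhiI r = h ` C"
    unfolding PhiI_eq C_def img1
  proof (rule coll1_cong)
    fix i assume "1 \<le> i \<and> i \<le> r"
    then show "fY r c Q n (bI r i) = h (2 * (int r + 1 - int i))"
      using S0 by (simp add: fY_I h_def field_simps)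
  qed
  have U: "A \<union> B \<union> C = {1..2 * int r}" unfolding A_def B_def C_def by (rule N1[OF r3])
  have P1: "fX r c Q n ` PhivPos r = h ` {1..2 * int r}"
    unfolding PhivPos_def image_Un XI XII XIII U[symmetric] by blast
  have P2: "fY r c Q n ` PhiPos r = h ` {1..2 * int r}"
    unfolding PhiPos_def image_Un YI YII YIII U[symmetric] by blast
  show ?thesis using XI YII XII YIII XIII YI P1 P2 unfolding h_def by simp
qed

lemma case2:
  assumes H: "\<forall>i\<in>{1..r}. nQ Q n (c i) = nQ Q n (c 1)"
  shows "fX r c Q n ` PhivPos r = (\<lambda>k. of_int k / of_int (nQ Q n (c 1))) ` {1..2 * int r - 1} \<and>
        fY r c Q n ` PhiPos r = (\<lambda>k. of_int k / of_int (nQ Q n (c 1))) ` {1..2 * int r - 1}"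
proof -
  have rr: "r \<in> {1..r}" using r3 by simp
  have "S = L" using H rr by blast
  then have LS: "L = S" by simp
  have LS'': "nQ Q n (c (Suc 0)) = S" using LS by simp
  have L0: "(of_int S :: rat) \<noteq> 0" using Spos by simp
  define h where "h = (\<lambda>k::int. (of_int k / of_int S :: rat))"
  define A where "A = {int j - int i | i j. 1 \<le> i \<and> i < j \<and> j \<le> r}"
  define B where "B = {int j - int i + 2 * (int r + 1 - int j) | i j. 1 \<le> i \<and> i < j \<and> j \<le> r}"
  define B2 where "B2 = {int j - int i + 2 * (int r - int j) + 1 | i j. 1 \<le> i \<and> i < j \<and> j \<le> r}"
  define C2 where "C2 = {2 * (int r - int i) + 1 | i. 1 \<le> i \<and> i \<le> r}"
  define C3 where "C3 = {int r + 1 - int i | i. 1 \<le> i \<and> i \<le> r}"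
  have XI: "fX r c Q n ` PhivI r = h ` A"
    unfolding PhivI_eq A_def img2 by (rule coll2_cong) (simp add: fX_I h_def LS LS'')
  have YII: "fY r c Q n ` PhiII r = h ` A"
    unfolding PhiII_eq A_def img2 by (rule coll2_cong) (simp add: fY_II h_def LS LS'')
  have XII: "fX r c Q n ` PhivII r = h ` B2"
    unfolding PhivII_eq B2_def img2
  proof (rule coll2_cong)
    fix i j assume "1 \<le> i \<and> i < j \<and> j \<le> r"
    then show "fX r c Q n (dII r i j) = h (int j - int i + 2 * (int r - int j) + 1)"
      using L0 by (simp add: fX_II h_def LS LS'' field_simps)
  qed
  have YIII: "fY r c Q n ` PhiIII r = h ` B"
    unfolding PhiIII_eq B_def img2 by (rule coll2_cong) (simp add: fY_III h_def LS LS'')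
  have XIII: "fX r c Q n ` PhivIII r = h ` C2"
    unfolding PhivIII_eq C2_def img1
  proof (rule coll1_cong)
    fix i assume "1 \<le> i \<and> i \<le> r"
    then show "fX r c Q n (dIII r i) = h (2 * (int r - int i) + 1)"
      using L0 by (simp add: fX_III h_def LS LS'' field_simps)
  qed
  have YI: "fY r c Q n ` PhiI r = h ` C3"
    unfolding PhiI_eq C3_def img1
  proof (rule coll1_cong)
    fix i assume "1 \<le> i \<and> i \<le> r"
    then show "fY r c Q n (bI r i) = h (int r + 1 - int i)"
      by (simp add: fY_I h_def LS LS'')
  qed
  have U2: "A \<union> B2 \<union> C2 = {1..2 * int r - 1}" unfolding A_def B2_def C2_def by (rule N2[OF r3])
  have U3: "C3 \<union> A \<union> B = {1..2 * int r - 1}" unfolding A_def B_def C3_def by (rule N3[OF r3])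
  have P1: "fX r c Q n ` PhivPos r = h ` {1..2 * int r - 1}"
    unfolding PhivPos_def image_Un XI XII XIII U2[symmetric] by blast
  have P2: "fY r c Q n ` PhiPos r = h ` {1..2 * int r - 1}"
    unfolding PhiPos_def image_Un YI YII YIII U3[symmetric] by blast
  show ?thesis using P1 P2 unfolding h_def LS by simp
qed

end

theorem lemma3p2:
  fixes r :: nat and n :: int
    and a c :: "nat \<Rightarrow> int^'m"
    and Q :: "int^'m \<Rightarrow> int"
  assumes r3: "r \<ge> 3"
    and npos: "n \<ge> 1"
    and cartan: "\<forall>i\<in>{1..r}. \<forall>j\<in>{1..r}. pair (a i) (c j) = cartanB r i j"
    and quad: "is_quadratic_form Q"
    and winv: "\<forall>i\<in>{1..r}. \<forall>y. Q (srefl a c i y) = Q y"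
  shows
    "((\<forall>i\<in>{1..<r}. nQ Q n (c i) = 2 * nQ Q n (c r)) \<longrightarrow>
        fX r c Q n ` PhivI r = fY r c Q n ` PhiII r \<and>
        fX r c Q n ` PhivII r = fY r c Q n ` PhiIII r \<and>
        fX r c Q n ` PhivIII r = fY r c Q n ` PhiI r \<and>
        fX r c Q n ` PhivPos r = (\<lambda>k. of_int k / of_int (2 * nQ Q n (c r))) ` {1..2 * int r} \<and>
        fY r c Q n ` PhiPos r = (\<lambda>k. of_int k / of_int (2 * nQ Q n (c r))) ` {1..2 * int r})
     \<and>
     ((\<forall>i\<in>{1..r}. nQ Q n (c i) = nQ Q n (c 1)) \<longrightarrow>
        fX r c Q n ` PhivPos r = (\<lambda>k. of_int k / of_int (nQ Q n (c 1))) ` {1..2 * int r - 1} \<and>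
        fY r c Q n ` PhiPos r = (\<lambda>k. of_int k / of_int (nQ Q n (c 1))) ` {1..2 * int r - 1})"
proof -
  interpret Bsetup r n a c Q using assms by (unfold_locales) auto
  show ?thesis using case1 case2 by blast
qed

end
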